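(* For every integer $n \geqslant 3$, the line graph $L(W_{n+1})$ of the wheel $W_{n+1}$ is not representable.
   Context: All graphs are finite and simple. For a word $W$ over an alphabet, two distinct letters $x,y$ alternate in $W$ if both occur in $W$ and, after erasing all other letters from $W$, one obtains a word of the form $xyxy\ldots$ or $yxyx\ldots$ (an alternating word of any length). A graph $G=(V,E)$ is representable if there exists a word $W$ over the alphabet $V$ in which every vertex occurs, such that for all distinct $x,y\in V$, the letters $x$ and $y$ alternate in $W$ if and only if $(x,y)\in E$. The wheel $W_m$ is the graph obtained from the cycle $C_m$ on $m$ vertices by adding one new vertex adjacent to all vertices of the cycle. The line graph $L(G)$ of a graph $G$ has the edges of $G$ as vertices, two of them being adjacent in $L(G)$ iff they share an endpoint in $G$. *)

theory Defs
  imports Main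
begin

text \<open>Simple graphs are represented by a vertex set V and an edge set E of
  two-element subsets of V.\<close>

definition alt_word :: "'a \<Rightarrow> 'a \<Rightarrow> nat \<Rightarrow> 'a list" where
  "alt_word x y k = map (\<lambda>i. if even i then x else y) [0..<k]"

definition alternate :: "'a list \<Rightarrow> 'a \<Rightarrow> 'a \<Rightarrow> bool" where
  "alternate W x y \<longleftrightarrow> x \<in> set W \<and> y \<in> set W \<and>
     (\<exists>k. filter (\<lambda>z. z = x \<or> z = y) W = alt_word x y k
         \<or> filter (\<lambda>z. z = x \<or> z = y) W = alt_word y x k)"

definition representable :: "'a set \<Rightarrow> 'a set set \<Rightarrow> bool" where
  "representable V E \<longleftrightarrow> (\<exists>W. set W = V \<and>
     (\<forall>x\<in>V. \<forall>y\<in>V. x \<noteq> y \<longrightarrow> (alternate W x y \<longleftrightarrow> {x, y} \<in> E)))"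

text \<open>Wheel W_m: cycle on vertices 0..m-1 plus hub m adjacent to all cycle vertices.\<close>
definition wheel_verts :: "nat \<Rightarrow> nat set" where
  "wheel_verts m = {0..m}"

definition wheel_edges :: "nat \<Rightarrow> nat set set" where
  "wheel_edges m = {{i, (i + 1) mod m} | i. i < m} \<union> {{i, m} | i. i < m}"

definition line_verts :: "'a set set \<Rightarrow> 'a set set" where
  "line_verts E = E"

definition line_edges :: "'a set set \<Rightarrow> 'a set set set" where
  "line_edges E = {{e, f} | e f. e \<in> E \<and> f \<in> E \<and> e \<noteq> f \<and> e \<inter> f \<noteq> {}}"

end

theory Submission
  imports Defs
begin

section \<open>Word lemmas\<close>

lemma alt_word_Suc: "alt_word x y (Suc k) = alt_word x y k @ [if even k then x else y]"
  by (simp add: alt_word_def)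

lemma length_alt_word[simp]: "length (alt_word x y k) = k"
  by (simp add: alt_word_def)

lemma cnt_alt:
  assumes "x \<noteq> y"
  shows "count_list (alt_word x y k) x = (k+1) div 2 \<and> count_list (alt_word x y k) y = k div 2"
  using assms by (induction k) (auto simp: alt_word_Suc alt_word_def)

lemma count_filter:
  "P x \<Longrightarrow> count_list (filter P xs) x = count_list xs x"
  by (induction xs) auto

definition Dm :: "'a list \<Rightarrow> 'a \<Rightarrow> 'a \<Rightarrow> bool" where
  "Dm W x y \<longleftrightarrow> (\<forall>j. count_list (take j W) y \<le> count_list (take j W) x \<and>
      count_list (take j W) x \<le> count_list (take j W) y + 1)"

lemma Dm_snoc:
  "Dm (W @ [z]) x y \<longleftrightarrow> Dm W x y \<and> count_list (W @ [z]) y \<le> count_list (W @ [z]) x \<and>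
      count_list (W @ [z]) x \<le> count_list (W @ [z]) y + 1"
proof
  assume a: "Dm (W @ [z]) x y"
  have "Dm W x y" unfolding Dm_def
  proof
    fix j
    show "count_list (take j W) y \<le> count_list (take j W) x \<and>
      count_list (take j W) x \<le> count_list (take j W) y + 1"
    proof (cases "j \<le> length W")
      case True
      then have "take j W = take j (W @ [z])" by simp
      then show ?thesis using a unfolding Dm_def by metis
    next
      case False
      then have "take j W = take (length W) (W @ [z])" by simp
      then show ?thesis using a unfolding Dm_def by metis
    qed
  qed
  moreover have "take (length (W@[z])) (W@[z]) = W @ [z]" by simp
  ultimately show "Dm W x y \<and> count_list (W @ [z]) y \<le> count_list (W @ [z]) x \<and>
      count_list (W @ [z]) x \<le> count_list (W @ [z]) y + 1" using a unfolding Dm_def by metis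
next
  assume a: "Dm W x y \<and> count_list (W @ [z]) y \<le> count_list (W @ [z]) x \<and>
      count_list (W @ [z]) x \<le> count_list (W @ [z]) y + 1"
  show "Dm (W @ [z]) x y" unfolding Dm_def
  proof
    fix j
    show "count_list (take j (W@[z])) y \<le> count_list (take j (W@[z])) x \<and>
      count_list (take j (W@[z])) x \<le> count_list (take j (W@[z])) y + 1"
    proof (cases "j \<le> length W")
      case True
      then have "take j (W@[z]) = take j W" by simp
      then show ?thesis using a unfolding Dm_def by metis
    next
      case False
      then have "take j (W@[z]) = W @ [z]" by simp
      then show ?thesis using a by metis
    qed
  qed
qed

lemma AW:
  assumes xy: "x \<noteq> y"
  shows "filter (\<lambda>z. z = x \<or> z = y) W = alt_word x y (length (filter (\<lambda>z. z = x \<or> z = y) W))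
         \<longleftrightarrow> Dm W x y"
proof (induction W rule: rev_induct)
  case Nil
  then show ?case by (simp add: Dm_def alt_word_def)
next
  case (snoc z W)
  let ?P = "\<lambda>z. z = x \<or> z = y"
  let ?L = "filter ?P W"
  let ?n = "length ?L"
  have cx: "count_list W x = count_list ?L x" and cy: "count_list W y = count_list ?L y"
    by (simp_all add: count_filter)
  show ?case
  proof (cases "z = x")
    case True
    have "filter ?P (W @ [z]) = ?L @ [x]" using True by simp
    moreover have "(?L @ [x] = alt_word x y (Suc ?n)) \<longleftrightarrow> ?L = alt_word x y ?n \<and> even ?n"
      using xy by (auto simp: alt_word_Suc)
    moreover have "?L = alt_word x y ?n \<Longrightarrow> even ?n \<longleftrightarrow>
        (count_list (W @ [z]) y \<le> count_list (W @ [z]) x \<and>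
         count_list (W @ [z]) x \<le> count_list (W @ [z]) y + 1)"
    proof -
      assume h: "?L = alt_word x y ?n"
      have "count_list W x = (?n+1) div 2" "count_list W y = ?n div 2"
        using cx cy cnt_alt[OF xy, of ?n] h by metis+
      then show ?thesis using True xy by simp presburger
    qed
    ultimately show ?thesis using snoc Dm_snoc[of W z x y] by auto
  next
    case F: False
    show ?thesis
    proof (cases "z = y")
      case True
      have "filter ?P (W @ [z]) = ?L @ [y]" using True by simp
      moreover have "(?L @ [y] = alt_word x y (Suc ?n)) \<longleftrightarrow> ?L = alt_word x y ?n \<and> odd ?n"
        using xy by (auto simp: alt_word_Suc)
      moreover have "?L = alt_word x y ?n \<Longrightarrow> odd ?n \<longleftrightarrow>
          (count_list (W @ [z]) y \<le> count_list (W @ [z]) x \<and>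
           count_list (W @ [z]) x \<le> count_list (W @ [z]) y + 1)"
      proof -
        assume h: "?L = alt_word x y ?n"
        have "count_list W x = (?n+1) div 2" "count_list W y = ?n div 2"
          using cx cy cnt_alt[OF xy, of ?n] h by metis+
        then show ?thesis using True xy by simp presburger
      qed
      ultimately show ?thesis using snoc Dm_snoc[of W z x y] by auto
    next
      case False
      have "filter ?P (W @ [z]) = ?L" using False F by simp
      moreover have "Dm W x y \<Longrightarrow> count_list W y \<le> count_list W x \<and>
          count_list W x \<le> count_list W y + 1"
        unfolding Dm_def by (metis take_all order_refl)
      ultimately show ?thesis using snoc Dm_snoc[of W z x y] False F by auto
    qed
  qed
qed

lemma alternate_Dm:
  assumes "x \<noteq> y"
  shows "alternate W x y \<longleftrightarrow> x \<in> set W \<and> y \<in> set W \<and> (Dm W x y \<or> Dm W y x)"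
proof -
  have e: "filter (\<lambda>z. z = y \<or> z = x) W = filter (\<lambda>z. z = x \<or> z = y) W"
    by (metis disj_commute)
  have 1: "(\<exists>k. filter (\<lambda>z. z = x \<or> z = y) W = alt_word x y k) \<longleftrightarrow> Dm W x y"
    using AW[OF assms, of W] by (metis length_alt_word)
  have 2: "(\<exists>k. filter (\<lambda>z. z = x \<or> z = y) W = alt_word y x k) \<longleftrightarrow> Dm W y x"
    using AW[of y x W] assms e by (metis length_alt_word)
  show ?thesis unfolding alternate_def using 1 2 by blast
qed

definition fo :: "'a list \<Rightarrow> 'a \<Rightarrow> nat" where
  "fo W x = length (takeWhile (\<lambda>z. z \<noteq> x) W)"

lemma fo_nth: "x \<in> set W \<Longrightarrow> fo W x < length W \<and> W ! fo W x = x"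
  unfolding fo_def by (induction W) auto

lemma fo_inj: "inj_on (fo W) (set W)"
  by (rule inj_onI) (metis fo_nth)

lemma not_in_take_fo: "y \<notin> set (take (fo W y) W)"
  unfolding fo_def by (metis (mono_tags, lifting) set_takeWhileD takeWhile_eq_take)

lemma in_take_fo: "x \<in> set W \<Longrightarrow> x \<in> set (take (Suc (fo W x)) W)"
  using fo_nth[of x W] by (metis in_set_conv_nth length_take lessI min_less_iff_conj nth_take)

lemma alt_Dm_dir:
  assumes "x \<noteq> y" "alternate W x y" "fo W x < fo W y"
  shows "Dm W x y"
proof -
  have xin: "x \<in> set W" using assms(2) unfolding alternate_def by auto
  have "\<not> Dm W y x"
  proof
    assume "Dm W y x"
    then have "count_list (take (Suc (fo W x)) W) x \<le> count_list (take (Suc (fo W x)) W) y"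
      unfolding Dm_def by blast
    moreover have "y \<notin> set (take (Suc (fo W x)) W)"
      using not_in_take_fo[of y W] set_take_subset_set_take[of "Suc (fo W x)" "fo W y" W] assms(3)
      by auto
    moreover have "x \<in> set (take (Suc (fo W x)) W)" using in_take_fo[OF xin] .
    ultimately show False by (simp add: count_list_0_iff)
  qed
  then show ?thesis using alternate_Dm[OF assms(1)] assms(2) by blast
qed


lemma mod_shift_ne:
  fixes x d m :: nat
  assumes "0 < d" "d < m"
  shows "(x + d) mod m \<noteq> x mod m"
proof
  assume "(x + d) mod m = x mod m"
  then have "m dvd (x + d) - x" using mod_eq_dvd_iff_nat[of x "x+d" m] by simp
  then have "m dvd d" by simp
  then show False using assms by (simp add: nat_dvd_not_less)
qed


lemma mod_add_inj:
  fixes i j c m :: nat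
  assumes "i < m" "j < m" "(i + c) mod m = (j + c) mod m"
  shows "i = j"
proof -
  have "\<not> i < j"
  proof
    assume ij: "i < j"
    then have "m dvd (j + c) - (i + c)" using mod_eq_dvd_iff_nat[of "i + c" "j + c" m] assms(3) by simp
    then have "m dvd j - i" by simp
    then show False using ij assms(2) by (simp add: nat_dvd_not_less)
  qed
  moreover have "\<not> j < i"
  proof
    assume ij: "j < i"
    then have "m dvd (i + c) - (j + c)" using mod_eq_dvd_iff_nat[of "j + c" "i + c" m] assms(3) by simp
    then have "m dvd i - j" by simp
    then show False using ij assms(1) by (simp add: nat_dvd_not_less)
  qed
  ultimately show ?thesis by simp
qed

lemma mod_Suc_shift: "Suc ((i + c) mod m) mod m = (Suc i mod m + c) mod m"
  by (simp add: mod_Suc_eq mod_add_left_eq)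

lemma cnt_mono:
  assumes "\<forall>k<K. Dm W (q k) (q (Suc k))" "i \<le> j" "j \<le> K"
  shows "count_list (take p W) (q j) \<le> count_list (take p W) (q i)"
  using assms(2,3)
proof (induction j)
  case 0 then show ?case by simp
next
  case (Suc j)
  show ?case
  proof (cases "i = Suc j")
    case True then show ?thesis by simp
  next
    case False
    then have "i \<le> j" "j < K" using Suc.prems by linarith+
    then have "count_list (take p W) (q j) \<le> count_list (take p W) (q i)" using Suc.IH by simp
    moreover have "count_list (take p W) (q (Suc j)) \<le> count_list (take p W) (q j)"
      using assms(1) \<open>j < K\<close> unfolding Dm_def by blast
    ultimately show ?thesis by linarith
  qed
qed

lemma fo_mono:
  assumes "\<forall>k<K. fo W (q k) < fo W (q (Suc k))" "i < j" "j \<le> K"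
  shows "fo W (q i) < fo W (q j)"
  using assms(2,3)
proof (induction j)
  case 0 then show ?case by simp
next
  case (Suc j)
  show ?case
  proof (cases "i = j")
    case True then show ?thesis using assms(1) Suc.prems by simp
  next
    case False
    then have "i < j" "j < K" using Suc.prems by linarith+
    then have "fo W (q i) < fo W (q j)" using Suc.IH by simp
    moreover have "fo W (q j) < fo W (q (Suc j))" using assms(1) \<open>j < K\<close> by blast
    ultimately show ?thesis by linarith
  qed
qed

lemma chain_gen:
  assumes h: "\<forall>k<K. fo W (q k) < fo W (q (Suc k)) \<and> q k \<noteq> q (Suc k) \<and> alternate W (q k) (q (Suc k))"
    and e: "q 0 \<noteq> q K" "alternate W (q 0) (q K)"
    and v: "\<forall>k\<le>K. q k \<in> set W" and ij: "i < j" "j \<le> K"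
  shows "q i \<noteq> q j \<and> alternate W (q i) (q j)"
proof -
  have fm: "\<forall>k<K. fo W (q k) < fo W (q (Suc k))" using h by blast
  have D: "\<forall>k<K. Dm W (q k) (q (Suc k))"
  proof (intro allI impI)
    fix k assume k: "k < K"
    have hk: "fo W (q k) < fo W (q (Suc k)) \<and> q k \<noteq> q (Suc k) \<and> alternate W (q k) (q (Suc k))"
      using h k by blast
    show "Dm W (q k) (q (Suc k))" by (rule alt_Dm_dir) (use hk in auto)
  qed
  have "0 < K" using ij by linarith
  then have f0K: "fo W (q 0) < fo W (q K)" using fo_mono[OF fm, of 0 K] by simp
  have D0K: "Dm W (q 0) (q K)" using alt_Dm_dir[OF e(1) e(2) f0K] .
  have fij: "fo W (q i) < fo W (q j)" using fo_mono[OF fm ij] .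
  then have ne: "q i \<noteq> q j" by auto
  have "Dm W (q i) (q j)" unfolding Dm_def
  proof
    fix p
    have a: "count_list (take p W) (q j) \<le> count_list (take p W) (q i)"
      using cnt_mono[OF D, of i j p] ij by simp
    have b: "count_list (take p W) (q i) \<le> count_list (take p W) (q 0)"
      using cnt_mono[OF D, of 0 i p] ij by simp
    have c: "count_list (take p W) (q K) \<le> count_list (take p W) (q j)"
      using cnt_mono[OF D, of j K p] ij by simp
    have d: "count_list (take p W) (q 0) \<le> count_list (take p W) (q K) + 1"
      using D0K unfolding Dm_def by blast
    show "count_list (take p W) (q j) \<le> count_list (take p W) (q i) \<and>
      count_list (take p W) (q i) \<le> count_list (take p W) (q j) + 1" using a b c d by linarith
  qed
  moreover have "q i \<in> set W" "q j \<in> set W" using v ij by auto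
  ultimately show ?thesis using alternate_Dm[OF ne] ne by blast
qed

section \<open>Abstract combinatorial core\<close>

locale wr =
  fixes m :: nat and V :: "'v set" and sg rh :: "nat \<Rightarrow> 'v" and adj :: "'v \<Rightarrow> 'v \<Rightarrow> bool"
    and f :: "'v \<Rightarrow> int"
  assumes m4: "4 \<le> m"
  and sV: "\<And>i. i < m \<Longrightarrow> sg i \<in> V" and rV: "\<And>i. i < m \<Longrightarrow> rh i \<in> V"
  and finj: "inj_on f V"
  and sinj: "\<And>i j. i < m \<Longrightarrow> j < m \<Longrightarrow> sg i = sg j \<Longrightarrow> i = j"
  and rinj: "\<And>i j. i < m \<Longrightarrow> j < m \<Longrightarrow> rh i = rh j \<Longrightarrow> i = j"
  and sr: "\<And>i j. i < m \<Longrightarrow> j < m \<Longrightarrow> sg i \<noteq> rh j"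
  and ss_adj: "\<And>i j. i < m \<Longrightarrow> j < m \<Longrightarrow> i \<noteq> j \<Longrightarrow> adj (sg i) (sg j)"
  and rs_adj: "\<And>i j. i < m \<Longrightarrow> j < m \<Longrightarrow> adj (rh i) (sg j) \<longleftrightarrow> (j = i \<or> j = Suc i mod m)"
  and rr_adj: "\<And>i j. i < m \<Longrightarrow> j < m \<Longrightarrow> adj (rh i) (rh j) \<longleftrightarrow> (j = Suc i mod m \<or> i = Suc j mod m)"
  and adj_sym: "\<And>x y. adj x y \<Longrightarrow> adj y x"
  and chain: "\<And>q K i j. (\<forall>k<K. f (q k) < f (q (Suc k)) \<and> adj (q k) (q (Suc k))) \<Longrightarrow>
      adj (q 0) (q K) \<Longrightarrow> (\<forall>k\<le>K. q k \<in> V) \<Longrightarrow> i < j \<Longrightarrow> j \<le> K \<Longrightarrow> adj (q i) (q j)"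
begin

lemma ST4:
  assumes V: "a \<in> V" "b \<in> V" "c \<in> V" "d \<in> V"
    and o: "f a < f b" "f b < f c" "f c < f d"
    and e: "adj a b" "adj b c" "adj c d" "adj a d"
  shows "adj a c \<and> adj b d"
proof -
  define q where "q = (\<lambda>k::nat. if k = 0 then a else if k = 1 then b else if k = 2 then c else d)"
  have k3: "\<And>k::nat. k < 3 \<Longrightarrow> k = 0 \<or> k = 1 \<or> k = 2" by auto
  have h: "\<forall>k<3. f (q k) < f (q (Suc k)) \<and> adj (q k) (q (Suc k))"
    using k3 o e by (auto simp: q_def)
  have hv: "\<forall>k\<le>3. q k \<in> V" using V by (auto simp: q_def)
  have h3: "adj (q 0) (q 3)" using e by (simp add: q_def)
  have "adj (q 0) (q 2)" by (rule chain[OF h h3 hv]) auto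
  moreover have "adj (q 1) (q 3)" by (rule chain[OF h h3 hv]) auto
  ultimately show ?thesis by (simp add: q_def)
qed

lemma sne: "i < m \<Longrightarrow> j < m \<Longrightarrow> i \<noteq> j \<Longrightarrow> sg i \<noteq> sg j"
  using sinj by blast

lemma fne: "x \<in> V \<Longrightarrow> y \<in> V \<Longrightarrow> x \<noteq> y \<Longrightarrow> f x \<noteq> f y"
  using finj by (meson inj_on_eq_iff)

lemma mid:
  assumes V: "s \<in> V" "r \<in> V" "t \<in> V" "x \<in> V"
    and o: "f s < f r" "f r < f t"
    and e: "adj s r" "adj r t" "adj s x" "adj t x" "\<not> adj r x"
    and ne: "x \<noteq> s" "x \<noteq> t"
  shows "f s < f x \<and> f x < f t"
proof -
  have "\<not> f x < f s"
  proof
    assume "f x < f s"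
    then have "adj x r" using ST4[of x s r t] V o e adj_sym by blast
    then show False using e adj_sym by blast
  qed
  moreover have "\<not> f t < f x"
  proof
    assume "f t < f x"
    then have "adj r x" using ST4[of s r t x] V o e adj_sym by blast
    then show False using e by blast
  qed
  ultimately show ?thesis using fne[of x s] fne[of x t] V ne by force
qed

lemma out:
  assumes V: "s \<in> V" "r \<in> V" "t \<in> V" "x \<in> V"
    and o: "(f r < f s \<and> f r < f t) \<or> (f s < f r \<and> f t < f r)"
    and e: "adj s r" "adj r t" "adj s x" "adj t x" "\<not> adj r x"
    and b: "f s < f x" "f x < f t"
  shows False
  using o
proof
  assume "f r < f s \<and> f r < f t"
  then have "adj r x" using ST4[of r s x t] V b e adj_sym by blast
  then show False using e by blast
next
  assume "f s < f r \<and> f t < f r"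
  then have "adj x r" using ST4[of s x t r] V b e adj_sym by blast
  then show False using e adj_sym by blast
qed

lemma rs_self: "i < m \<Longrightarrow> adj (rh i) (sg i)" using rs_adj by blast
lemma rs_suc: "Suc i < m \<Longrightarrow> adj (rh i) (sg (Suc i))" using rs_adj[of i "Suc i"] by simp
lemma rs_last: "adj (rh (m-1)) (sg 0)" using rs_adj[of "m-1" 0] m4 by simp
lemma rs_not: "i < m \<Longrightarrow> j < m \<Longrightarrow> j \<noteq> i \<Longrightarrow> j \<noteq> Suc i mod m \<Longrightarrow> \<not> adj (rh i) (sg j)"
  using rs_adj by blast
lemma rs_not': "Suc i < m \<Longrightarrow> j < m \<Longrightarrow> j \<noteq> i \<Longrightarrow> j \<noteq> Suc i \<Longrightarrow> \<not> adj (rh i) (sg j)"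
  using rs_adj[of i j] by simp
lemma rr_suc: "Suc i < m \<Longrightarrow> adj (rh i) (rh (Suc i))" using rr_adj[of i "Suc i"] by simp
lemma rr_last: "adj (rh (m-1)) (rh 0)" using rr_adj[of "m-1" 0] m4 by simp


lemma core:
  assumes M1: "f (sg 0) < f (rh (m-1))" and M2: "f (rh (m-1)) < f (sg (m-1))"
  shows False
proof -
  have m1: "m - 1 < m" "0 < m" using m4 by auto
  have step1: "f (sg 0) < f (sg j) \<and> f (sg j) < f (sg (m-1))" if "0 < j" "j < m-1" for j
  proof (rule mid[of "sg 0" "rh (m-1)" "sg (m-1)" "sg j"])
    show "sg 0 \<in> V" "rh (m-1) \<in> V" "sg (m-1) \<in> V" "sg j \<in> V" using sV rV m1 that by auto
    show "adj (sg 0) (rh (m - 1))" using rs_last adj_sym by blast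
    show "adj (rh (m - 1)) (sg (m - 1))" using rs_self m1 by blast
    show "adj (sg 0) (sg j)" "adj (sg (m-1)) (sg j)" using ss_adj that by auto
    show "\<not> adj (rh (m - 1)) (sg j)" using rs_not[of "m-1" j] that m1 by auto
    show "sg j \<noteq> sg 0" by (rule sne) (use that m4 in auto)
        show "sg j \<noteq> sg (m-1)" by (rule sne) (use that m4 in auto)
  qed (use M1 M2 in auto)
  have s0last: "f (sg 0) < f (sg (m-1))" using M1 M2 by simp
  have incrP: "\<forall>j. i < j \<and> j < m \<longrightarrow> f (sg i) < f (sg j)" for i
  proof (induction i)
    case 0
    show ?case
    proof (intro allI impI)
      fix j assume j: "0 < j \<and> j < m"
      show "f (sg 0) < f (sg j)"
      proof (cases "j < m - 1")
        case True then show ?thesis using step1 j by blast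
      next
        case False then have "j = m - 1" using j by linarith
        then show ?thesis using s0last by simp
      qed
    qed
  next
    case (Suc i)
    show ?case
    proof (intro allI impI)
      fix j assume j: "Suc i < j \<and> j < m"
      have ai: "f (sg i) < f (sg (Suc i))" "f (sg i) < f (sg j)" "f (sg i) < f (sg (m-1))"
        using Suc.IH j by auto
      have b1: "f (sg (Suc i)) < f (sg (m-1))" using step1[of "Suc i"] j by auto
      have Vs: "sg i \<in> V" "sg (Suc i) \<in> V" "rh i \<in> V" "sg j \<in> V" "sg (m-1) \<in> V"
        using sV rV j by auto
      have e: "adj (sg i) (rh i)" "adj (rh i) (sg (Suc i))" using rs_self rs_suc j adj_sym by auto
      have nb: "\<not> (f (sg i) < f (rh i) \<and> f (rh i) < f (sg (Suc i)))"
      proof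
        assume h: "f (sg i) < f (rh i) \<and> f (rh i) < f (sg (Suc i))"
        have "f (sg i) < f (sg (m-1)) \<and> f (sg (m-1)) < f (sg (Suc i))"
        proof (rule mid[OF Vs(1,3,2,5)])
          show "adj (sg i) (sg (m-1))" "adj (sg (Suc i)) (sg (m-1))" using ss_adj j by auto
          show "\<not> adj (rh i) (sg (m - 1))" by (rule rs_not') (use j in auto)
          show "sg (m-1) \<noteq> sg i" by (rule sne) (use j m4 in auto)
        show "sg (m-1) \<noteq> sg (Suc i)" by (rule sne) (use j m4 in auto)
        qed (use h e in auto)
        then show False using b1 by simp
      qed
      have o: "(f (rh i) < f (sg i) \<and> f (rh i) < f (sg (Suc i))) \<or>
               (f (sg i) < f (rh i) \<and> f (sg (Suc i)) < f (rh i))"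
      proof -
        have im: "i < m" "Suc i < m" using j by auto
        have "rh i \<noteq> sg i" "rh i \<noteq> sg (Suc i)" using sr[OF im(1) im(1)] sr[OF im(2) im(1)] by metis+
        then have "f (rh i) \<noteq> f (sg i)" "f (rh i) \<noteq> f (sg (Suc i))" using fne Vs by metis+
        then show ?thesis using nb ai(1) by linarith
      qed
      have "\<not> (f (sg i) < f (sg j) \<and> f (sg j) < f (sg (Suc i)))"
      proof
        assume h: "f (sg i) < f (sg j) \<and> f (sg j) < f (sg (Suc i))"
        show False
        proof (rule out[OF Vs(1,3,2,4) o])
          show "adj (sg i) (sg j)" "adj (sg (Suc i)) (sg j)" using ss_adj j by auto
          show "\<not> adj (rh i) (sg j)" by (rule rs_not') (use j in auto)
        qed (use h e in auto)
      qed
      then show "f (sg (Suc i)) < f (sg j)"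
      proof -
        have "sg j \<noteq> sg (Suc i)" by (rule sne) (use j in auto)
        then have "f (sg j) \<noteq> f (sg (Suc i))" using fne Vs by metis
        then show ?thesis using \<open>\<not> (f (sg i) < f (sg j) \<and> f (sg j) < f (sg (Suc i)))\<close> ai by linarith
      qed
    qed
  qed
  have incr: "i < j \<Longrightarrow> j < m \<Longrightarrow> f (sg i) < f (sg j)" for i j using incrP by blast
  define A where "A i \<longleftrightarrow> f (sg (Suc i)) < f (rh i)" for i
  define B where "B i \<longleftrightarrow> f (rh i) < f (sg i)" for i
  have typAB: "A i \<or> B i" if i: "i < m - 1" for i
  proof (rule ccontr)
    assume "\<not> (A i \<or> B i)"
    then have h0: "f (sg i) \<le> f (rh i)" "f (rh i) \<le> f (sg (Suc i))" unfolding A_def B_def by auto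
    have Vs: "sg i \<in> V" "sg (Suc i) \<in> V" "rh i \<in> V" "sg 0 \<in> V" "sg (m-1) \<in> V"
      using sV rV i by auto
    have im: "i < m" "Suc i < m" using i by auto
    have "rh i \<noteq> sg i" "rh i \<noteq> sg (Suc i)" using sr[OF im(1) im(1)] sr[OF im(2) im(1)] by metis+
    then have "f (rh i) \<noteq> f (sg i)" "f (rh i) \<noteq> f (sg (Suc i))" using fne Vs by metis+
    then have h: "f (sg i) < f (rh i)" "f (rh i) < f (sg (Suc i))" using h0 by linarith+
    have e: "adj (sg i) (rh i)" "adj (rh i) (sg (Suc i))" using rs_self rs_suc i adj_sym by auto
    show False
    proof (cases "Suc i < m - 1")
      case True
      have "f (sg i) < f (sg (m-1)) \<and> f (sg (m-1)) < f (sg (Suc i))"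
      proof (rule mid[OF Vs(1,3,2,5)])
        show "adj (sg i) (sg (m-1))" "adj (sg (Suc i)) (sg (m-1))" using ss_adj True by auto
        show "\<not> adj (rh i) (sg (m - 1))" by (rule rs_not') (use True in auto)
        show "sg (m-1) \<noteq> sg i" by (rule sne) (use True m4 in auto)
        show "sg (m-1) \<noteq> sg (Suc i)" by (rule sne) (use True m4 in auto)
      qed (use h e in auto)
      moreover have "Suc i < m - 1" "m - 1 < m" using True m4 by linarith+
      ultimately show False using incr[of "Suc i" "m-1"] by linarith
    next
      case False
      then have ii: "Suc i = m - 1" using i by simp
      have "f (sg i) < f (sg 0) \<and> f (sg 0) < f (sg (Suc i))"
      proof (rule mid[OF Vs(1,3,2,4)])
        show "adj (sg i) (sg 0)" "adj (sg (Suc i)) (sg 0)" using ss_adj ii m4 by auto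
        show "\<not> adj (rh i) (sg 0)" using rs_not[of i 0] ii m4 by auto
        show "sg 0 \<noteq> sg i" by (rule sne) (use ii m4 m4 in auto)
        show "sg 0 \<noteq> sg (Suc i)" by (rule sne) (use ii m4 m4 in auto)
      qed (use h e in auto)
      moreover have "0 < i" "i < m" using ii m4 by linarith+
      ultimately show False using incr[of 0 i] by linarith
    qed
  qed
  have incS: "f (sg i) < f (sg (Suc i))" if "Suc i < m" for i
    by (rule incr) (use that in auto)
  have excl: "\<not> (A i \<and> B i)" if "i < m - 1" for i
  proof -
    have "Suc i < m" using that by linarith
    then show ?thesis using incS[of i] unfolding A_def B_def by linarith
  qed
  have noBA: "\<not> (B i \<and> A (Suc i))" if i: "Suc i < m - 1" for i
  proof
    assume h: "B i \<and> A (Suc i)"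
    have i2: "Suc (Suc i) < m" "Suc i < m" "i < m" using i by linarith+
    have "adj (rh i) (sg (Suc (Suc i))) \<and> adj (sg (Suc i)) (rh (Suc i))"
    proof (rule ST4)
      show "rh i \<in> V" "sg (Suc i) \<in> V" "sg (Suc (Suc i)) \<in> V" "rh (Suc i) \<in> V" using sV rV i2 by auto
      show "f (rh i) < f (sg (Suc i))" using h incS[OF i2(2)] unfolding B_def by linarith
      show "f (sg (Suc i)) < f (sg (Suc (Suc i)))" using incS[OF i2(1)] .
      show "f (sg (Suc (Suc i))) < f (rh (Suc i))" using h unfolding A_def by auto
      show "adj (rh i) (sg (Suc i))" using rs_suc[OF i2(2)] .
      show "adj (sg (Suc i)) (sg (Suc (Suc i)))" using ss_adj i2 by auto
      show "adj (sg (Suc (Suc i))) (rh (Suc i))" using rs_suc[OF i2(1)] adj_sym by blast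
      show "adj (rh i) (rh (Suc i))" using rr_suc[OF i2(2)] .
    qed
    moreover have "\<not> adj (rh i) (sg (Suc (Suc i)))" by (rule rs_not') (use i2 in auto)
    ultimately show False by blast
  qed
  have mono: "i \<le> k \<Longrightarrow> k < m - 1 \<Longrightarrow> B i \<Longrightarrow> B k" for i k
  proof (induction k)
    case 0 then show ?case by simp
  next
    case (Suc k)
    show ?case
    proof (cases "i = Suc k")
      case True then show ?thesis using Suc.prems by simp
    next
      case False
      then have "i \<le> k" "k < m - 1" using Suc.prems by linarith+
      then have "B k" using Suc.IH Suc.prems by blast
      then show ?thesis using typAB[of "Suc k"] noBA[of k] Suc.prems by blast
    qed
  qed
  define fw where "fw k \<longleftrightarrow> f (rh k) < f (rh (Suc k mod m))" for k
  have rne: "f (rh i) \<noteq> f (rh j)" if "i < m" "j < m" "i \<noteq> j" for i j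
    using fne[of "rh i" "rh j"] rV rinj that by blast
  have nm: "m - 2 < m - 1" "m - 1 < m" "Suc (m - 2) = m - 1" "Suc (m - 1) = m" "0 < m - 1" "1 < m - 1"
    "m - 2 \<noteq> 0" "Suc 0 < m"
    using m4 by linarith+
  have bw: "(Suc k < m - 1 \<and> A k \<and> B (Suc k)) \<or> (k = m - 2 \<and> A k) \<or> (k = m - 1 \<and> B 0)"
    if k: "k < m" "\<not> fw k" for k
  proof -
    consider (c1) "Suc k < m - 1" | (c2) "k = m - 2" | (c3) "k = m - 1" using k m4 by linarith
    then show ?thesis
    proof cases
      case c1
      have k2: "Suc (Suc k) < m" "Suc k < m" "k < m" using c1 by linarith+
      have "Suc k mod m = Suc k" using k2 by simp
      then have rv: "f (rh (Suc k)) < f (rh k)" using k(2) rne[of k "Suc k"] k2 unfolding fw_def by force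
      have aa: False if "A k" "A (Suc k)"
      proof -
        have "adj (sg (Suc k)) (rh (Suc k)) \<and> adj (sg (Suc (Suc k))) (rh k)"
        proof (rule ST4)
          show "sg (Suc k) \<in> V" "sg (Suc (Suc k)) \<in> V" "rh (Suc k) \<in> V" "rh k \<in> V" using sV rV k2 by auto
          show "f (sg (Suc k)) < f (sg (Suc (Suc k)))" using incS[OF k2(1)] .
          show "f (sg (Suc (Suc k))) < f (rh (Suc k))" using that unfolding A_def by auto
          show "f (rh (Suc k)) < f (rh k)" using rv .
          show "adj (sg (Suc k)) (sg (Suc (Suc k)))" using ss_adj k2 by auto
          show "adj (sg (Suc (Suc k))) (rh (Suc k))" using rs_suc[OF k2(1)] adj_sym by blast
          show "adj (rh (Suc k)) (rh k)" using rr_suc[OF k2(2)] adj_sym by blast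
          show "adj (sg (Suc k)) (rh k)" using rs_suc[OF k2(2)] adj_sym by blast
        qed
        moreover have "\<not> adj (rh k) (sg (Suc (Suc k)))" by (rule rs_not') (use k2 in auto)
        ultimately show False using adj_sym by blast
      qed
      have bb: False if "B k" "B (Suc k)"
      proof -
        have "adj (rh (Suc k)) (sg k) \<and> adj (rh k) (sg (Suc k))"
        proof (rule ST4)
          show "rh (Suc k) \<in> V" "rh k \<in> V" "sg k \<in> V" "sg (Suc k) \<in> V" using sV rV k2 by auto
          show "f (rh (Suc k)) < f (rh k)" using rv .
          show "f (rh k) < f (sg k)" using that unfolding B_def by auto
          show "f (sg k) < f (sg (Suc k))" using incS[OF k2(2)] .
          show "adj (rh (Suc k)) (rh k)" using rr_suc[OF k2(2)] adj_sym by blast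
          show "adj (rh k) (sg k)" using rs_self[OF k2(3)] .
          show "adj (sg k) (sg (Suc k))" using ss_adj k2 by auto
          show "adj (rh (Suc k)) (sg (Suc k))" using rs_self[OF k2(2)] .
        qed
        moreover have "\<not> adj (rh (Suc k)) (sg k)" by (rule rs_not') (use k2 in auto)
        ultimately show False by blast
      qed
      have "k < m - 1" using c1 by linarith
      then have "A k \<and> B (Suc k)" using typAB[of k] typAB[of "Suc k"] noBA[of k] c1 aa bb by blast
      then show ?thesis using c1 by blast
    next
      case c2
      have "Suc k mod m = m - 1" using c2 nm by simp
      then have rv: "f (rh (m - 1)) < f (rh (m - 2))"
        using k(2) rne[of "m - 2" "m - 1"] nm c2 unfolding fw_def by force
      have "\<not> B (m - 2)"
      proof
        assume hB: "B (m - 2)"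
        have "adj (rh (m - 1)) (sg (m - 2)) \<and> adj (rh (m - 2)) (sg (m - 1))"
        proof (rule ST4)
          show "rh (m - 1) \<in> V" "rh (m - 2) \<in> V" "sg (m - 2) \<in> V" "sg (m - 1) \<in> V" using sV rV nm by auto
          show "f (rh (m - 1)) < f (rh (m - 2))" using rv .
          show "f (rh (m - 2)) < f (sg (m - 2))" using hB unfolding B_def by auto
          show "f (sg (m - 2)) < f (sg (m - 1))" using incS[of "m - 2"] nm by simp
          show "adj (rh (m - 1)) (rh (m - 2))" using rr_suc[of "m - 2"] nm adj_sym by simp
          show "adj (rh (m - 2)) (sg (m - 2))" using rs_self nm by simp
          show "adj (sg (m - 2)) (sg (m - 1))" using ss_adj nm by simp
          show "adj (rh (m - 1)) (sg (m - 1))" using rs_self nm by simp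
        qed
        moreover have "\<not> adj (rh (m - 1)) (sg (m - 2))"
          by (rule rs_not) (use nm in simp_all)
        ultimately show False by blast
      qed
      then have "A k" using typAB[of "m - 2"] nm c2 by blast
      then show ?thesis using c2 by blast
    next
      case c3
      have "Suc k mod m = 0" using c3 nm by simp
      then have rv: "f (rh 0) < f (rh (m - 1))"
        using k(2) rne[of 0 "m - 1"] nm c3 unfolding fw_def by force
      have "\<not> A 0"
      proof
        assume hA: "A 0"
        have "adj (sg 0) (rh 0) \<and> adj (sg 1) (rh (m - 1))"
        proof (rule ST4)
          show "sg 0 \<in> V" "sg 1 \<in> V" "rh 0 \<in> V" "rh (m - 1) \<in> V" using sV rV nm by auto
          show "f (sg 0) < f (sg 1)" using incS[of 0] nm by simp
          show "f (sg 1) < f (rh 0)" using hA unfolding A_def by simp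
          show "f (rh 0) < f (rh (m - 1))" using rv .
          show "adj (sg 0) (sg 1)" using ss_adj nm by simp
          show "adj (sg 1) (rh 0)" using rs_suc[of 0] nm adj_sym by simp
          show "adj (rh 0) (rh (m - 1))" using rr_last adj_sym by blast
          show "adj (sg 0) (rh (m - 1))" using rs_last adj_sym by blast
        qed
        moreover have "\<not> adj (rh (m - 1)) (sg 1)"
          by (rule rs_not) (use nm in simp_all)
        ultimately show False using adj_sym by blast
      qed
      then have "B 0" using typAB[of 0] nm by blast
      then show ?thesis using c3 by blast
    qed
  qed
  have uniq: False if kk: "k < k'" "k' < m" "\<not> fw k" "\<not> fw k'" for k k'
  proof -
    have bk: "(Suc k < m - 1 \<and> A k \<and> B (Suc k)) \<or> (k = m - 2 \<and> A k) \<or> (k = m - 1 \<and> B 0)"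
      using bw[of k] kk by linarith
    have bk': "(Suc k' < m - 1 \<and> A k' \<and> B (Suc k')) \<or> (k' = m - 2 \<and> A k') \<or> (k' = m - 1 \<and> B 0)"
      using bw[of k'] kk by linarith
    show False using bk
    proof (elim disjE conjE)
      assume h: "Suc k < m - 1" "A k" "B (Suc k)"
      show False using bk'
      proof (elim disjE conjE)
        assume h': "Suc k' < m - 1" "A k'"
        have "B k'" by (rule mono[of "Suc k"]) (use h h' kk in linarith)+
        then show False using excl[of k'] h' by linarith
      next
        assume h': "k' = m - 2" "A k'"
        have "B k'" by (rule mono[of "Suc k"]) (use h h' kk nm in linarith)+
        then show False using excl[of k'] h' nm by linarith
      next
        assume h': "k' = m - 1" "B 0"
        have "B k" by (rule mono[of 0]) (use h h' kk nm in linarith)+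
        then show False using excl[of k] h by linarith
      qed
    next
      assume h: "k = m - 2" "A k"
      then have h': "k' = m - 1" "B 0" using bk' kk nm by linarith+
      have "B k" by (rule mono[of 0]) (use h h' kk nm in linarith)+
      then show False using excl[of k] h nm by linarith
    next
      assume h: "k = m - 1" "B 0"
      then show False using kk by linarith
    qed
  qed
  obtain b where b: "b < m" "\<And>k. k < m \<Longrightarrow> k \<noteq> b \<Longrightarrow> fw k"
  proof (cases "\<exists>k<m. \<not> fw k")
    case True
    then obtain b where b: "b < m" "\<not> fw b" by blast
    show ?thesis
    proof (rule that[OF b(1)])
      fix k assume "k < m" "k \<noteq> b"
      then show "fw k" using uniq[of k b] uniq[of b k] b by (metis linorder_neqE_nat)
    qed
  next
    case False
    then show ?thesis using that[of 0] nm by auto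
  qed
  define q where "q j = rh ((b + 1 + j) mod m)" for j
  have m0: "0 < m" using m4 by simp
  have h1: "\<forall>k<m - 1. f (q k) < f (q (Suc k)) \<and> adj (q k) (q (Suc k))"
  proof (intro allI impI)
    fix k assume k: "k < m - 1"
    define c where "c = (b + 1 + k) mod m"
    have cm: "c < m" using m0 unfolding c_def by simp
    have "(b + Suc k) mod m \<noteq> b mod m" by (rule mod_shift_ne) (use k in linarith)+
    then have cb: "c \<noteq> b" using b(1) unfolding c_def by simp
    have sc: "Suc c mod m = (b + 1 + Suc k) mod m" unfolding c_def by (simp add: mod_Suc_eq)
    have qk: "q k = rh c" "q (Suc k) = rh (Suc c mod m)" unfolding q_def c_def using sc c_def by auto
    have "fw c" using b(2)[OF cm cb] .
    then have "f (rh c) < f (rh (Suc c mod m))" unfolding fw_def .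
    moreover have "adj (rh c) (rh (Suc c mod m))" using rr_adj[of c "Suc c mod m"] cm m0 by simp
    ultimately show "f (q k) < f (q (Suc k)) \<and> adj (q k) (q (Suc k))" using qk by simp
  qed
  have h2: "adj (q 0) (q (m - 1))"
  proof -
    have "q (m - 1) = rh b" unfolding q_def using b(1) m0 by simp
    moreover have "q 0 = rh (Suc b mod m)" unfolding q_def by simp
    moreover have "adj (rh (Suc b mod m)) (rh b)" using rr_adj[of "Suc b mod m" b] b(1) m0 by simp
    ultimately show ?thesis by simp
  qed
  have h3: "\<forall>k\<le>m - 1. q k \<in> V" unfolding q_def using rV m0 by simp
  have "adj (q 0) (q 2)" by (rule chain[OF h1 h2 h3]) (use nm in linarith)+
  moreover have "\<not> adj (q 0) (q 2)"
  proof -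
    have e1: "(b + 2 + 1) mod m \<noteq> (b + 2) mod m" by (rule mod_shift_ne) (use m4 in linarith)+
    have e2: "(b + 1 + 3) mod m \<noteq> (b + 1) mod m" by (rule mod_shift_ne) (use m4 in linarith)+
    have "(b + 1 + 2) mod m \<noteq> Suc ((b + 1 + 0) mod m) mod m"
      using e1 by (simp add: mod_Suc_eq add.commute add.left_commute)
    moreover have "(b + 1 + 0) mod m \<noteq> Suc ((b + 1 + 2) mod m) mod m"
    proof -
      have r: "Suc ((b + 1 + 2) mod m) mod m = (b + 1 + 3) mod m" by (simp add: mod_Suc_eq eval_nat_numeral)
      show ?thesis by (metis e2 r add_0_right)
    qed
    ultimately show ?thesis unfolding q_def using rr_adj m0 by simp
  qed
  ultimately show False by blast
qed


lemma rot: "wr m V (\<lambda>k. sg ((k + c) mod m)) (\<lambda>k. rh ((k + c) mod m)) adj f"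
proof -
  have m0: "0 < m" using m4 by simp
  have H1: "\<And>i j. i < m \<Longrightarrow> j < m \<Longrightarrow> (i + c) mod m = (j + c) mod m \<longleftrightarrow> i = j"
    using mod_add_inj by blast
  show ?thesis
  proof (unfold_locales)
    show "4 \<le> m" using m4 .
    show "\<And>i. i < m \<Longrightarrow> sg ((i + c) mod m) \<in> V" using sV m0 by simp
    show "\<And>i. i < m \<Longrightarrow> rh ((i + c) mod m) \<in> V" using rV m0 by simp
    show "inj_on f V" using finj .
    show "\<And>i j. i < m \<Longrightarrow> j < m \<Longrightarrow> sg ((i + c) mod m) = sg ((j + c) mod m) \<Longrightarrow> i = j"
      using sinj H1 m0 by (meson mod_less_divisor)
    show "\<And>i j. i < m \<Longrightarrow> j < m \<Longrightarrow> rh ((i + c) mod m) = rh ((j + c) mod m) \<Longrightarrow> i = j"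
      using rinj H1 m0 by (meson mod_less_divisor)
    show "\<And>i j. i < m \<Longrightarrow> j < m \<Longrightarrow> sg ((i + c) mod m) \<noteq> rh ((j + c) mod m)"
      using sr m0 by simp
    show "\<And>i j. i < m \<Longrightarrow> j < m \<Longrightarrow> i \<noteq> j \<Longrightarrow> adj (sg ((i + c) mod m)) (sg ((j + c) mod m))"
      using ss_adj H1 m0 by simp
    show "adj (rh ((i + c) mod m)) (sg ((j + c) mod m)) \<longleftrightarrow> (j = i \<or> j = Suc i mod m)"
      if "i < m" "j < m" for i j
    proof -
      have "adj (rh ((i + c) mod m)) (sg ((j + c) mod m)) \<longleftrightarrow>
          ((j + c) mod m = (i + c) mod m \<or> (j + c) mod m = (Suc i mod m + c) mod m)"
        using rs_adj[of "(i + c) mod m" "(j + c) mod m"] m0 mod_Suc_shift[of i c m] by simp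
      also have "\<dots> \<longleftrightarrow> (j = i \<or> j = Suc i mod m)" using H1 that m0 by simp
      finally show ?thesis .
    qed
    show "adj (rh ((i + c) mod m)) (rh ((j + c) mod m)) \<longleftrightarrow> (j = Suc i mod m \<or> i = Suc j mod m)"
      if "i < m" "j < m" for i j
    proof -
      have "adj (rh ((i + c) mod m)) (rh ((j + c) mod m)) \<longleftrightarrow>
          ((j + c) mod m = (Suc i mod m + c) mod m \<or> (i + c) mod m = (Suc j mod m + c) mod m)"
        using rr_adj[of "(i + c) mod m" "(j + c) mod m"] m0 mod_Suc_shift[of i c m]
          mod_Suc_shift[of j c m] by simp
      also have "\<dots> \<longleftrightarrow> (j = Suc i mod m \<or> i = Suc j mod m)" using H1 that m0 by simp
      finally show ?thesis .
    qed
    show "\<And>x y. adj x y \<Longrightarrow> adj y x" using adj_sym .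
    show "\<And>q K i j. (\<forall>k<K. f (q k) < f (q (Suc k)) \<and> adj (q k) (q (Suc k))) \<Longrightarrow>
      adj (q 0) (q K) \<Longrightarrow> (\<forall>k\<le>K. q k \<in> V) \<Longrightarrow> i < j \<Longrightarrow> j \<le> K \<Longrightarrow> adj (q i) (q j)"
      using chain .
  qed
qed

lemma rev: "wr m V sg rh adj (\<lambda>x. - f x)"
proof (unfold_locales)
  show "inj_on (\<lambda>x. - f x) V" using finj by (simp add: inj_on_def)
  fix q :: "nat \<Rightarrow> 'v" and K i j
  assume h: "\<forall>k<K. - f (q k) < - f (q (Suc k)) \<and> adj (q k) (q (Suc k))"
    and e: "adj (q 0) (q K)" and v: "\<forall>k\<le>K. q k \<in> V" and ij: "i < j" "j \<le> K"
  define q' where "q' k = q (K - k)" for k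
  have h': "\<forall>k<K. f (q' k) < f (q' (Suc k)) \<and> adj (q' k) (q' (Suc k))"
  proof (intro allI impI)
    fix k assume k: "k < K"
    have "- f (q (K - Suc k)) < - f (q (Suc (K - Suc k))) \<and> adj (q (K - Suc k)) (q (Suc (K - Suc k)))"
      using h k by simp
    moreover have "Suc (K - Suc k) = K - k" using k by simp
    ultimately show "f (q' k) < f (q' (Suc k)) \<and> adj (q' k) (q' (Suc k))"
      unfolding q'_def using adj_sym by auto
  qed
  have e': "adj (q' 0) (q' K)" unfolding q'_def using e adj_sym by simp
  have v': "\<forall>k\<le>K. q' k \<in> V" unfolding q'_def using v by simp
  have "adj (q' (K - j)) (q' (K - i))" by (rule chain[OF h' e' v']) (use ij in linarith)+
  moreover have "q' (K - j) = q j" "q' (K - i) = q i" unfolding q'_def using ij by simp_all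
  ultimately show "adj (q i) (q j)" using adj_sym by simp
qed (use m4 sV rV sinj rinj sr ss_adj rs_adj rr_adj adj_sym in auto)

lemma minzero:
  assumes mn: "\<forall>i<m. f (sg 0) \<le> f (sg i)"
  shows False
proof -
  have nm: "0 < m" "m - 1 < m" "1 < m" "m - 1 \<noteq> 0" "m - 1 \<noteq> 1" "Suc (m - 1) = m" using m4 by linarith+
  have V: "sg 0 \<in> V" "sg 1 \<in> V" "sg (m - 1) \<in> V" "rh 0 \<in> V" "rh (m - 1) \<in> V"
    using sV rV nm by auto
  have d1: "sg 0 \<noteq> sg 1" "sg 0 \<noteq> sg (m - 1)" "sg 1 \<noteq> sg (m - 1)"
    by (rule sne; use nm in simp)+
  have s01: "f (sg 0) < f (sg 1)" "f (sg 0) < f (sg (m - 1))" "f (sg 1) \<noteq> f (sg (m - 1))"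
  proof -
    have "f (sg 0) \<noteq> f (sg 1)" "f (sg 0) \<noteq> f (sg (m - 1))" using fne V d1 by metis+
    moreover have "f (sg 0) \<le> f (sg 1)" "f (sg 0) \<le> f (sg (m - 1))" using mn nm by auto
    ultimately show "f (sg 0) < f (sg 1)" "f (sg 0) < f (sg (m - 1))" by linarith+
    show "f (sg 1) \<noteq> f (sg (m - 1))" using fne V d1 by metis
  qed
  have r0ne: "f (rh 0) \<noteq> f (sg 0)" "f (rh 0) \<noteq> f (sg 1)"
    "f (rh (m - 1)) \<noteq> f (sg 0)" "f (rh (m - 1)) \<noteq> f (sg (m - 1))"
    using fne V sr nm by metis+
  show False
  proof (cases "f (sg 0) < f (rh (m - 1)) \<and> f (rh (m - 1)) < f (sg (m - 1))")
    case True
    then show False using core by blast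
  next
    case F1: False
    show False
    proof (cases "f (sg 0) < f (rh 0) \<and> f (rh 0) < f (sg 1)")
      case True
      interpret w2: wr m V "\<lambda>k. sg ((k + 1) mod m)" "\<lambda>k. rh ((k + 1) mod m)" adj "\<lambda>x. - f x"
        using wr.rot[OF rev] .
      have "(m - 1 + 1) mod m = 0" using nm by simp
      then show False using w2.core True nm by simp
    next
      case F2: False
      have o1: "(f (rh 0) < f (sg 0) \<and> f (rh 0) < f (sg 1)) \<or> (f (sg 0) < f (rh 0) \<and> f (sg 1) < f (rh 0))"
        using F2 s01 r0ne by linarith
      have o2: "(f (rh (m - 1)) < f (sg 0) \<and> f (rh (m - 1)) < f (sg (m - 1))) \<or>
          (f (sg 0) < f (rh (m - 1)) \<and> f (sg (m - 1)) < f (rh (m - 1)))"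
        using F1 s01 r0ne by linarith
      have a1: "adj (sg 0) (rh 0)" "adj (rh 0) (sg 1)" using rs_self rs_suc nm adj_sym by auto
      have a2: "adj (sg 0) (rh (m - 1))" "adj (rh (m - 1)) (sg (m - 1))" using rs_last rs_self nm adj_sym by auto
      have n1: "\<not> adj (rh 0) (sg (m - 1))" by (rule rs_not) (use nm in simp_all)
      have n2: "\<not> adj (rh (m - 1)) (sg 1)" by (rule rs_not) (use nm in simp_all)
      have ss: "adj (sg 0) (sg 1)" "adj (sg 1) (sg (m - 1))" "adj (sg 0) (sg (m - 1))" "adj (sg (m - 1)) (sg 1)"
        using ss_adj nm by auto
      show False
      proof (cases "f (sg 1) < f (sg (m - 1))")
        case True
        show False
          by (rule out[OF V(1,5,3,2) o2 a2 ss(1) ss(4) n2]) (use s01 True in auto)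
      next
        case False
        then have "f (sg (m - 1)) < f (sg 1)" using s01 by linarith
        show False
          by (rule out[OF V(1,4,2,3) o1 a1 ss(3) ss(2) n1]) (use s01 \<open>f (sg (m - 1)) < f (sg 1)\<close> in auto)
      qed
    qed
  qed
qed

lemma contradiction: False
proof -
  have m0: "0 < m" using m4 by simp
  have fin: "finite ((\<lambda>i. f (sg i)) ` {..<m})" by simp
  have ne: "(\<lambda>i. f (sg i)) ` {..<m} \<noteq> {}" using m0 by auto
  obtain c where c: "c < m" "f (sg c) = Min ((\<lambda>i. f (sg i)) ` {..<m})"
    using Min_in[OF fin ne] by auto
  have mn: "\<forall>i<m. f (sg c) \<le> f (sg i)" using c Min_le[OF fin] by auto
  interpret w2: wr m V "\<lambda>k. sg ((k + c) mod m)" "\<lambda>k. rh ((k + c) mod m)" adj f using rot .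
  show False
  proof (rule w2.minzero)
    show "\<forall>i<m. f (sg ((0 + c) mod m)) \<le> f (sg ((i + c) mod m))" using mn c m0 by simp
  qed
qed

end

section \<open>The concrete wheel\<close>

lemma LE: "x \<in> E \<Longrightarrow> y \<in> E \<Longrightarrow> x \<noteq> y \<Longrightarrow> {x, y} \<in> line_edges E \<longleftrightarrow> x \<inter> y \<noteq> {}"
  unfolding line_edges_def by (auto simp: doubleton_eq_iff)

lemma suc_mod_ne: "0 < j \<or> 2 \<le> m \<Longrightarrow> j < m \<Longrightarrow> Suc j mod m \<noteq> j"
proof (cases "Suc j < m")
  case True then show ?thesis by simp
next
  case False
  assume a: "0 < j \<or> 2 \<le> m" "j < m"
  then have "Suc j = m" using False by linarith
  then have "Suc j mod m = 0" by simp
  moreover have "j \<noteq> 0" using a \<open>Suc j = m\<close> by linarith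
  ultimately show ?thesis by simp
qed

lemma alternate_sym: "alternate W x y \<Longrightarrow> alternate W y x"
proof -
  have e: "filter (\<lambda>z. z = y \<or> z = x) W = filter (\<lambda>z. z = x \<or> z = y) W"
    by (metis disj_commute)
  assume "alternate W x y"
  then show ?thesis using e unfolding alternate_def by metis
qed

lemma suc_mod_inj: "i < m \<Longrightarrow> j < m \<Longrightarrow> Suc i mod m = Suc j mod m \<Longrightarrow> i = j"
  using mod_add_inj[of i m j 1] by simp

lemma rh_inj:
  assumes "i < m" "j < m" "4 \<le> m" "{i, Suc i mod m} = {j, Suc j mod m}"
  shows "i = j"
proof (rule ccontr)
  assume ij: "i \<noteq> j"
  then have a: "i = Suc j mod m" "j = Suc i mod m" using assms(4) by (auto simp: doubleton_eq_iff)
  then have "Suc (Suc i) mod m = i" by (metis mod_Suc_eq)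
  then have "(i + 2) mod m = i mod m" using assms(1) by simp
  moreover have "(i + 2) mod m \<noteq> i mod m" by (rule mod_shift_ne) (use assms in linarith)+
  ultimately show False by simp
qed

lemma rr_int:
  assumes "i < m" "j < m" "4 \<le> m"
  shows "({i, Suc i mod m} \<noteq> {j, Suc j mod m} \<and> {i, Suc i mod m} \<inter> {j, Suc j mod m} \<noteq> {})
    \<longleftrightarrow> (j = Suc i mod m \<or> i = Suc j mod m)"
proof (cases "i = j")
  case True
  then show ?thesis using suc_mod_ne[of j m] assms by auto
next
  case False
  then have ne: "{i, Suc i mod m} \<noteq> {j, Suc j mod m}" using rh_inj assms by blast
  have "Suc i mod m \<noteq> Suc j mod m" using suc_mod_inj False assms by blast
  then show ?thesis using ne False by auto
qed

lemma rs_int: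
  assumes "i < m" "j < m"
  shows "{i, Suc i mod m} \<inter> {j, m} \<noteq> {} \<longleftrightarrow> (j = i \<or> j = Suc i mod m)"
proof -
  have "0 < m" using assms by simp
  then have "Suc i mod m < m" by simp
  then have "Suc i mod m \<noteq> m" by linarith
  moreover have "i \<noteq> m" using assms by simp
  ultimately show ?thesis by blast
qed

theorem theorem2:
  fixes n :: nat
  assumes "n \<ge> 3"
  shows "\<not> representable (line_verts (wheel_edges (n + 1))) (line_edges (wheel_edges (n + 1)))"
proof
  define m where "m = n + 1"
  define E where "E = wheel_edges m"
  have m4: "4 \<le> m" using assms unfolding m_def by simp
  have m0: "0 < m" using m4 by simp
  assume "representable (line_verts (wheel_edges (n + 1))) (line_edges (wheel_edges (n + 1)))"
  then have "\<exists>W. set W = E \<and> (\<forall>x\<in>E. \<forall>y\<in>E. x \<noteq> y \<longrightarrow> (alternate W x y \<longleftrightarrow> {x, y} \<in> line_edges E))"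
    unfolding representable_def line_verts_def E_def m_def by simp
  then obtain W where W0: "set W = E"
    "\<forall>x\<in>E. \<forall>y\<in>E. x \<noteq> y \<longrightarrow> (alternate W x y \<longleftrightarrow> {x, y} \<in> line_edges E)"
    by blast
  have W: "set W = E"
    "\<And>x y. x \<in> E \<Longrightarrow> y \<in> E \<Longrightarrow> x \<noteq> y \<Longrightarrow> alternate W x y \<longleftrightarrow> {x, y} \<in> line_edges E"
    using W0 by simp_all
  define adj where "adj x y \<longleftrightarrow> x \<noteq> y \<and> alternate W x y" for x y
  define f where "f x = int (fo W x)" for x
  define sg where "sg i = {i, m}" for i
  define rh where "rh i = {i, Suc i mod m}" for i
  have adjE: "adj x y \<longleftrightarrow> x \<noteq> y \<and> x \<inter> y \<noteq> {}" if "x \<in> E" "y \<in> E" for x y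
    using W(2)[OF that] LE[OF that] unfolding adj_def by blast
  have sE: "sg i \<in> E" if "i < m" for i
  proof -
    have "sg i \<in> {{i, m} | i. i < m}" unfolding sg_def using that by blast
    then show ?thesis unfolding E_def wheel_edges_def by (rule UnI2)
  qed
  have rE: "rh i \<in> E" if "i < m" for i
  proof -
    have "{i, (i + 1) mod m} \<in> {{i, (i + 1) mod m} | i. i < m}" using that by blast
    then have "{i, (i + 1) mod m} \<in> E" unfolding E_def wheel_edges_def by (rule UnI1)
    then show ?thesis unfolding rh_def by simp
  qed
  have mrh: "m \<notin> rh i" if "i < m" for i
  proof -
    have "Suc i mod m < m" using m0 by simp
    then have "m \<noteq> Suc i mod m" by linarith
    moreover have "m \<noteq> i" using that by simp
    ultimately show ?thesis unfolding rh_def by simp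
  qed
  interpret w: wr m "set W" sg rh adj f
  proof (unfold_locales)
    show "4 \<le> m" using m4 .
    show "\<And>i. i < m \<Longrightarrow> sg i \<in> set W" using sE W(1) by simp
    show "\<And>i. i < m \<Longrightarrow> rh i \<in> set W" using rE W(1) by simp
    show "inj_on f (set W)" unfolding f_def using fo_inj[of W] by (simp add: inj_on_def)
    show "i = j" if "i < m" "j < m" "sg i = sg j" for i j
      using that unfolding sg_def by (simp add: doubleton_eq_iff)
    show "\<And>i j. i < m \<Longrightarrow> j < m \<Longrightarrow> rh i = rh j \<Longrightarrow> i = j"
      unfolding rh_def using rh_inj m4 by blast
    show "sg i \<noteq> rh j" if "i < m" "j < m" for i j
    proof
      assume "sg i = rh j"
      moreover have "m \<in> sg i" unfolding sg_def by simp
      ultimately show False using mrh[OF that(2)] by simp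
    qed
    show "adj (sg i) (sg j)" if "i < m" "j < m" "i \<noteq> j" for i j
    proof -
      have "sg i \<noteq> sg j" using that unfolding sg_def by (simp add: doubleton_eq_iff)
      moreover have "m \<in> sg i \<inter> sg j" unfolding sg_def by simp
      ultimately show ?thesis using adjE[OF sE[OF that(1)] sE[OF that(2)]] by blast
    qed
    show "adj (rh i) (sg j) \<longleftrightarrow> (j = i \<or> j = Suc i mod m)" if "i < m" "j < m" for i j
    proof -
      have "rh i \<noteq> sg j"
      proof
        assume "rh i = sg j"
        moreover have "m \<in> sg j" unfolding sg_def by simp
        ultimately show False using mrh[OF that(1)] by simp
      qed
      then have "adj (rh i) (sg j) \<longleftrightarrow> rh i \<inter> sg j \<noteq> {}"
        using adjE[OF rE[OF that(1)] sE[OF that(2)]] by blast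
      also have "\<dots> \<longleftrightarrow> (j = i \<or> j = Suc i mod m)" unfolding rh_def sg_def by (rule rs_int[OF that])
      finally show ?thesis .
    qed
    show "adj (rh i) (rh j) \<longleftrightarrow> (j = Suc i mod m \<or> i = Suc j mod m)" if "i < m" "j < m" for i j
    proof -
      have "adj (rh i) (rh j) \<longleftrightarrow> rh i \<noteq> rh j \<and> rh i \<inter> rh j \<noteq> {}"
        using adjE[OF rE[OF that(1)] rE[OF that(2)]] by blast
      also have "\<dots> \<longleftrightarrow> (j = Suc i mod m \<or> i = Suc j mod m)" unfolding rh_def by (rule rr_int[OF that m4])
      finally show ?thesis .
    qed
    show "adj y x" if "adj x y" for x y
    proof -
      have "x \<noteq> y" "alternate W x y" using that unfolding adj_def by simp_all
      then have "y \<noteq> x" "alternate W y x" using alternate_sym[of W x y] by simp_all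
      then show ?thesis unfolding adj_def by simp
    qed
    show "adj (q i) (q j)" if h: "\<forall>k<K. f (q k) < f (q (Suc k)) \<and> adj (q k) (q (Suc k))"
      and e: "adj (q 0) (q K)" and v: "\<forall>k\<le>K. q k \<in> set W" and ij: "i < j" "j \<le> K" for q K i j
    proof -
      have h': "\<forall>k<K. fo W (q k) < fo W (q (Suc k)) \<and> q k \<noteq> q (Suc k) \<and> alternate W (q k) (q (Suc k))"
        using h unfolding f_def adj_def by simp
      have "q i \<noteq> q j \<and> alternate W (q i) (q j)"
        by (rule chain_gen[OF h' _ _ v ij]) (use e in \<open>simp_all add: adj_def\<close>)
      then show ?thesis unfolding adj_def .
    qed
  qed
  show False using w.contradiction .
qed

end
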